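(* Consider the problem $\min\{F(x,z): x\in\operatorname{conv}(X),\ z\in Z\}$ where $F:\mathbb{R}^n\times\mathbb{R}^q\to\mathbb{R}$ is convex and continuously differentiable, $X\subset\mathbb{R}^n$ is nonempty and compact (so $\operatorname{conv}(X)$ is convex and compact), $Z\subseteq\mathbb{R}^q$ is nonempty, closed and convex, and for each $x\in\operatorname{conv}(X)$ the map $z\mapsto F(x,z)$ is inf-compact on $Z$. Fix an integer $t_{\max}\ge1$. Let $x^0\in\operatorname{conv}(X)$, $z^0\in\arg\min_{z\in Z}F(x^0,z)$, and $D^0\subseteq\operatorname{conv}(X)$ be a nonempty closed convex set. For $k=0,1,2,\dots$ perform one SDM-GS iteration: set $(\tilde x,\tilde z)=(x^k,z^k)$; for $t=1,\dots,t_{\max}$ let $\tilde x\in\arg\min\{F(x,\tilde z): x\in D^k\}$ and then $\tilde z\in\arg\min\{F(\tilde x,z): z\in Z\}$; set $(x^{k+1},z^{k+1})=(\tilde x,\tilde z)$; choose $\hat x^{k+1}\in\arg\min\{\nabla_x F(x^{k+1},z^{k+1})(x-x^{k+1}): x\in X\}$; and let $D^{k+1}$ be any closed convex set with $\{x^{k+1}+\alpha(\hat x^{k+1}-x^{k+1}):\alpha\in[0,1]\}\subseteq D^{k+1}\subseteq\operatorname{conv}(X)$. Then the sequence $\{(x^k,z^k)\}$ has limit points, and every limit point $(\bar x,\bar z)$ is an optimal solution of $\min\{F(x,z): x\in\operatorname{conv}(X),\ z\in Z\}$.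
   Context: A function $z\mapsto g(z)$ is inf-compact on $Z$ if for every $\ell\in\mathbb{R}$ the set $\{z\in Z: g(z)\le\ell\}$ is compact. $\nabla_x F(x,z)$ denotes the partial gradient with respect to $x$, viewed as a row vector. *)

theory Defs
  imports "HOL-Analysis.Analysis"
begin

definition argmin_set :: "('a \<Rightarrow> real) \<Rightarrow> 'a set \<Rightarrow> 'a set" where
  "argmin_set f S = {x \<in> S. \<forall>y \<in> S. f x \<le> f y}"

definition inf_compact_on :: "('b::topological_space \<Rightarrow> real) \<Rightarrow> 'b set \<Rightarrow> bool" where
  "inf_compact_on g Z \<longleftrightarrow> (\<forall>l::real. compact {z \<in> Z. g z \<le> l})"

end

theory Submission imports Defs begin

lemma dir_deriv:
  assumes "(g has_derivative Dg) (at p)"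
  shows "((\<lambda>t. (g (p + t *\<^sub>R v) - g p) / t) \<longlongrightarrow> Dg v) (at_right (0::real))"
proof -
  have l: "bounded_linear Dg" using assms has_derivative_bounded_linear by blast
  have "((\<lambda>t. p + t *\<^sub>R v) has_derivative (\<lambda>t. t *\<^sub>R v)) (at 0)"
    by (auto intro!: derivative_eq_intros)
  then have "((\<lambda>t. g (p + t *\<^sub>R v)) has_derivative (\<lambda>t. Dg (t *\<^sub>R v))) (at 0)"
    using has_derivative_compose[of "\<lambda>t. p + t *\<^sub>R v" _ 0 UNIV g Dg] assms by simp
  then have "((\<lambda>t. g (p + t *\<^sub>R v)) has_derivative (\<lambda>t. t * Dg v)) (at 0)"
  proof -
    have "\<And>t. Dg (t *\<^sub>R v) = t * Dg v"
      using l by (simp add: bounded_linear.linear linear_scale)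
    then show ?thesis using \<open>((\<lambda>t. g (p + t *\<^sub>R v)) has_derivative (\<lambda>t. Dg (t *\<^sub>R v))) (at 0)\<close> by simp
  qed
  then have "((\<lambda>t. g (p + t *\<^sub>R v)) has_field_derivative Dg v) (at 0)"
    by (simp add: has_field_derivative_def mult.commute[of _ "Dg v"])
  then have "((\<lambda>t. g (p + t *\<^sub>R v)) has_field_derivative Dg v) (at 0 within {0<..})"
    by (rule has_field_derivative_at_within)
  then show ?thesis by (simp add: has_field_derivative_iff)
qed

lemma tangent_ineq:
  assumes c: "convex_on UNIV g" and d: "(g has_derivative Dg) (at p)"
  shows "g p + Dg (q - p) \<le> (g q :: real)"
proof -
  have "Dg (q - p) \<le> g q - g p"
  proof (rule tendsto_upperbound[OF dir_deriv[OF d]])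
    show "\<forall>\<^sub>F t in at_right 0. (g (p + t *\<^sub>R (q - p)) - g p) / t \<le> g q - g p"
      unfolding eventually_at_right_less
    proof (rule eventually_at_rightI[of _ 1])
      fix t :: real assume t: "t \<in> {0<..<1}"
      have "g ((1 - t) *\<^sub>R p + t *\<^sub>R q) \<le> (1 - t) * g p + t * g q"
        using t by (intro convex_onD[OF c]) auto
      moreover have "p + t *\<^sub>R (q - p) = (1 - t) *\<^sub>R p + t *\<^sub>R q" by (simp add: algebra_simps)
      ultimately have "g (p + t *\<^sub>R (q - p)) - g p \<le> t * (g q - g p)" by (simp add: algebra_simps)
      then show "(g (p + t *\<^sub>R (q - p)) - g p) / t \<le> g q - g p"
        using t by (simp add: divide_simps mult.commute)
    qed simp
  qed (simp add: trivial_limit_at_right_real)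
  then show ?thesis by simp
qed

lemma dir_nonneg:
  assumes d: "(g has_derivative Dg) (at p)"
    and h: "\<And>t. 0 < t \<Longrightarrow> t \<le> 1 \<Longrightarrow> g p \<le> (g (p + t *\<^sub>R v) :: real)"
  shows "0 \<le> Dg v"
proof (rule tendsto_lowerbound[OF dir_deriv[OF d]])
  show "\<forall>\<^sub>F t in at_right 0. 0 \<le> (g (p + t *\<^sub>R v) - g p) / t"
  proof (rule eventually_at_rightI[of _ 1])
    fix t :: real assume t: "t \<in> {0<..<1}"
    then show "0 \<le> (g (p + t *\<^sub>R v) - g p) / t" using h[of t] by simp
  qed simp
qed (simp add: trivial_limit_at_right_real)

lemma bounded_sub:
  fixes G :: "'a::euclidean_space \<times> 'b::euclidean_space \<Rightarrow> real"
  assumes cvx: "convex_on UNIV G" and cont: "continuous_on UNIV G"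
    and C: "compact C" and Zc: "closed Z" and Zv: "convex Z"
    and x1: "x1 \<in> C" and z1: "z1 \<in> Z" and l: "G (x1, z1) \<le> l"
    and K: "compact {w \<in> Z. G (x1, w) \<le> l}"
  shows "bounded {w. \<exists>y\<in>C. w \<in> Z \<and> G (y, w) \<le> l}"
proof -
  obtain R0 where R0: "\<And>w. w \<in> Z \<Longrightarrow> G (x1, w) \<le> l \<Longrightarrow> dist z1 w \<le> R0"
    using compact_imp_bounded[OF K] unfolding bounded_any_center[where a=z1] by auto
  define R where "R = max R0 0 + 1"
  have R: "R > 0" "R > R0" unfolding R_def by auto
  define A where "A = Z \<inter> sphere z1 R"
  have Ac: "compact A" unfolding A_def using Zc by (simp add: compact_Int_closed closed_Int_compact)
  define Q where "Q = (cball x1 1 \<times> A) \<inter> {p. G p \<le> l}"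
  have "closed {p. G p \<le> l}"
    by (rule closed_Collect_le[OF cont]) simp
  then have Qc: "compact Q" unfolding Q_def
    using Ac by (intro compact_Int_closed compact_Times) auto
  define P where "P = fst ` Q"
  have "compact P" unfolding P_def using Qc
    by (intro compact_continuous_image continuous_intros)
  then have "open (- P)" by (simp add: compact_imp_closed open_Compl)
  moreover have "x1 \<notin> P"
  proof
    assume "x1 \<in> P"
    then obtain w where "(x1, w) \<in> Q" unfolding P_def by force
    then have "w \<in> Z" "dist z1 w = R" "G (x1, w) \<le> l" unfolding Q_def A_def by auto
    then show False using R0 R by force
  qed
  ultimately obtain \<delta> where \<delta>: "\<delta> > 0" "ball x1 \<delta> \<subseteq> - P"
    using open_contains_ball by blast
  define e where "e = min \<delta> 1"
  have e: "e > 0" "e \<le> \<delta>" "e \<le> 1" unfolding e_def using \<delta> by auto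
  obtain B where B: "\<And>y. y \<in> C \<Longrightarrow> dist x1 y \<le> B"
    using compact_imp_bounded[OF C] unfolding bounded_any_center[where a=x1] by auto
  have B0: "B \<ge> 0" using B[OF x1] by simp
  define M where "M = R + R * B / e"
  have "dist z1 w \<le> M" if w: "w \<in> Z" and y: "y \<in> C" and Gl: "G (y, w) \<le> l" for y w
  proof (rule ccontr)
    assume "\<not> dist z1 w \<le> M"
    then have dM: "dist z1 w > M" by simp
    define d where "d = dist z1 w"
    have "R * B / e \<ge> 0" using R B0 e by simp
    then have dR: "d > R" using dM unfolding M_def d_def by simp
    have "d > R * B / e" using dM R unfolding M_def d_def by simp
    then have dRB: "R * B < e * d" using e by (simp add: field_simps)
    define lam where "lam = R / d"
    have lam: "0 < lam" "lam < 1" unfolding lam_def using dR R by auto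
    define y' where "y' = x1 + lam *\<^sub>R (y - x1)"
    define w' where "w' = z1 + lam *\<^sub>R (w - z1)"
    have "dist x1 y' = lam * dist x1 y"
      unfolding y'_def using lam by (simp add: dist_norm norm_minus_commute)
    also have "\<dots> \<le> lam * B" using B[OF y] lam by simp
    also have "\<dots> < e" unfolding lam_def using dRB dR R by (simp add: field_simps)
    finally have dy: "dist x1 y' < e" .
    have "dist z1 w' = lam * d"
      unfolding w'_def d_def using lam by (simp add: dist_norm norm_minus_commute)
    then have dw: "dist z1 w' = R" unfolding lam_def using dR R by simp
    have w'eq: "w' = (1 - lam) *\<^sub>R z1 + lam *\<^sub>R w" unfolding w'_def by (simp add: algebra_simps)
    have w'Z: "w' \<in> Z" unfolding w'eq using lam z1 w Zv by (intro convexD) auto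
    have peq: "(y', w') = (1 - lam) *\<^sub>R (x1, z1) + lam *\<^sub>R (y, w)"
      unfolding y'_def w'eq by (simp add: algebra_simps)
    have "G (y', w') \<le> (1 - lam) * G (x1, z1) + lam * G (y, w)"
      unfolding peq using lam by (intro convex_onD[OF cvx]) auto
    also have "\<dots> \<le> (1 - lam) * l + lam * l"
      using lam l Gl by (intro add_mono mult_left_mono) auto
    finally have "G (y', w') \<le> l" by (simp add: algebra_simps)
    then have "(y', w') \<in> Q" unfolding Q_def A_def using dy e dw w'Z by auto
    then have "y' \<in> P" unfolding P_def by force
    moreover have "y' \<in> ball x1 \<delta>" using dy e by auto
    ultimately show False using \<delta> by auto
  qed
  then show ?thesis unfolding bounded_any_center[where a=z1] by blast
qed

theorem proposition3:
  fixes F :: "'a::euclidean_space \<Rightarrow> 'b::euclidean_space \<Rightarrow> real"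
    and DF :: "'a \<times> 'b \<Rightarrow> ('a \<times> 'b) \<Rightarrow>\<^sub>L real"
    and X :: "'a set" and Z :: "'b set" and tmax :: nat
    and x :: "nat \<Rightarrow> 'a" and z :: "nat \<Rightarrow> 'b"
    and xt :: "nat \<Rightarrow> nat \<Rightarrow> 'a" and zt :: "nat \<Rightarrow> nat \<Rightarrow> 'b"
    and xhat :: "nat \<Rightarrow> 'a" and D :: "nat \<Rightarrow> 'a set"
  assumes F_convex: "convex_on UNIV (\<lambda>p. F (fst p) (snd p))"
    and F_deriv: "\<And>p. ((\<lambda>p. F (fst p) (snd p)) has_derivative blinfun_apply (DF p)) (at p)"
    and DF_cont: "continuous_on UNIV DF"
    and X_ne: "X \<noteq> {}" and X_compact: "compact X"
    and Z_ne: "Z \<noteq> {}" and Z_closed: "closed Z" and Z_convex: "convex Z"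
    and inf_comp: "\<And>u. u \<in> convex hull X \<Longrightarrow> inf_compact_on (\<lambda>w. F u w) Z"
    and tmax: "tmax \<ge> 1"
    and x0: "x 0 \<in> convex hull X"
    and z0: "z 0 \<in> argmin_set (\<lambda>w. F (x 0) w) Z"
    and D0: "D 0 \<noteq> {}" "closed (D 0)" "convex (D 0)" "D 0 \<subseteq> convex hull X"
    and inner_start: "\<And>k. xt k 0 = x k" "\<And>k. zt k 0 = z k"
    and inner_x: "\<And>k t. 1 \<le> t \<Longrightarrow> t \<le> tmax \<Longrightarrow>
                    xt k t \<in> argmin_set (\<lambda>u. F u (zt k (t - 1))) (D k)"
    and inner_z: "\<And>k t. 1 \<le> t \<Longrightarrow> t \<le> tmax \<Longrightarrow>
                    zt k t \<in> argmin_set (\<lambda>w. F (xt k t) w) Z"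
    and x_next: "\<And>k. x (Suc k) = xt k tmax"
    and z_next: "\<And>k. z (Suc k) = zt k tmax"
    and xhat_def: "\<And>k. xhat (Suc k) \<in>
           argmin_set (\<lambda>u. DF (x (Suc k), z (Suc k)) (u - x (Suc k), 0)) X"
    and D_next: "\<And>k. closed (D (Suc k)) \<and> convex (D (Suc k))"
    and D_lower: "\<And>k. {x (Suc k) + \<alpha> *\<^sub>R (xhat (Suc k) - x (Suc k)) | \<alpha>. 0 \<le> \<alpha> \<and> \<alpha> \<le> 1}
                        \<subseteq> D (Suc k)"
    and D_upper: "\<And>k. D (Suc k) \<subseteq> convex hull X"
  shows "(\<exists>l r. strict_mono r \<and> ((\<lambda>k. (x (r k), z (r k))) \<longlongrightarrow> l) sequentially)
       \<and> (\<forall>xb zb r. strict_mono r \<and> ((\<lambda>k. (x (r k), z (r k))) \<longlongrightarrow> (xb, zb)) sequentially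
            \<longrightarrow> (xb, zb) \<in> argmin_set (\<lambda>p. F (fst p) (snd p)) (convex hull X \<times> Z))"
proof -
  define G where "G = (\<lambda>p. F (fst p) (snd p))"
  define C where "C = convex hull X"
  define f where "f = (\<lambda>m. F (x m) (z m))"
  have Gder: "\<And>p. (G has_derivative blinfun_apply (DF p)) (at p)" unfolding G_def by (rule F_deriv)
  have Gcv: "convex_on UNIV G" unfolding G_def by (rule F_convex)
  have Gic: "\<And>p. isCont G p" using Gder has_derivative_continuous by blast
  have Gcont: "continuous_on UNIV G" using Gic by (simp add: continuous_at_imp_continuous_on)
  have Ftend: "((\<lambda>k. F (a k) (b k)) \<longlongrightarrow> F p q) sequentially"
    if "(a \<longlongrightarrow> p) sequentially" "(b \<longlongrightarrow> q) sequentially" for a b p q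
  proof -
    have "((\<lambda>k. G (a k, b k)) \<longlongrightarrow> G (p, q)) sequentially"
      by (rule isCont_tendsto_compose[OF Gic]) (intro tendsto_Pair that)
    then show ?thesis unfolding G_def by simp
  qed
  have DFtend: "((\<lambda>k. DF (a k, b k)) \<longlongrightarrow> DF (p, q)) sequentially"
    if "(a \<longlongrightarrow> p) sequentially" "(b \<longlongrightarrow> q) sequentially" for a b p q
  proof -
    have "isCont DF (p, q)" using DF_cont by (simp add: continuous_on_eq_continuous_at)
    then show ?thesis by (rule isCont_tendsto_compose) (intro tendsto_Pair that)
  qed
  have Ccomp: "compact C" unfolding C_def using X_compact by (rule compact_convex_hull)
  have Cconv: "convex C" unfolding C_def by simp
  have xtD: "\<And>k t. 1 \<le> t \<Longrightarrow> t \<le> tmax \<Longrightarrow> xt k t \<in> D k"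
    using inner_x unfolding argmin_set_def by blast
  have xtmin: "\<And>k t u. 1 \<le> t \<Longrightarrow> t \<le> tmax \<Longrightarrow> u \<in> D k \<Longrightarrow> F (xt k t) (zt k (t - 1)) \<le> F u (zt k (t - 1))"
    using inner_x unfolding argmin_set_def by blast
  have ztZ: "\<And>k t. 1 \<le> t \<Longrightarrow> t \<le> tmax \<Longrightarrow> zt k t \<in> Z"
    using inner_z unfolding argmin_set_def by blast
  have ztmin: "\<And>k t w. 1 \<le> t \<Longrightarrow> t \<le> tmax \<Longrightarrow> w \<in> Z \<Longrightarrow> F (xt k t) (zt k t) \<le> F (xt k t) w"
    using inner_z unfolding argmin_set_def by blast
  have DC: "\<And>m. D m \<subseteq> C" unfolding C_def using D0 D_upper by (case_tac m) auto
  have xC: "\<And>m. x m \<in> C"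
  proof -
    fix m show "x m \<in> C"
    proof (cases m)
      case 0 then show ?thesis using x0 C_def by simp
    next
      case (Suc k) then show ?thesis using x_next xtD[where k=k and t=tmax] tmax DC by auto
    qed
  qed
  have zmin: "\<And>m. z m \<in> Z \<and> (\<forall>w\<in>Z. F (x m) (z m) \<le> F (x m) w)"
  proof -
    fix m show "z m \<in> Z \<and> (\<forall>w\<in>Z. F (x m) (z m) \<le> F (x m) w)"
    proof (cases m)
      case 0 then show ?thesis using z0 unfolding argmin_set_def by simp
    next
      case (Suc k) then show ?thesis using inner_z[where k=k and t=tmax] tmax x_next z_next
        unfolding argmin_set_def by auto
    qed
  qed
  have zZ: "\<And>m. z m \<in> Z" using zmin by blast
  have seg: "\<And>m a. 1 \<le> m \<Longrightarrow> 0 \<le> a \<Longrightarrow> a \<le> 1 \<Longrightarrow> x m + a *\<^sub>R (xhat m - x m) \<in> D m"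
  proof -
    fix m :: nat and a :: real assume "1 \<le> m" "0 \<le> a" "a \<le> 1"
    then obtain k where "m = Suc k" by (cases m) auto
    then show "x m + a *\<^sub>R (xhat m - x m) \<in> D m" using D_lower[of k] \<open>0 \<le> a\<close> \<open>a \<le> 1\<close> by blast
  qed
  have xD: "\<And>m. 1 \<le> m \<Longrightarrow> x m \<in> D m" using seg[of _ 0] by simp
  have chain: "F (xt k (Suc n)) (zt k (Suc n)) \<le> F u (z k)"
    if "Suc n \<le> tmax" "u \<in> D k" for k n u
    using that
  proof (induction n arbitrary: u)
    case 0
    have "F (xt k 1) (zt k 1) \<le> F (xt k 1) (zt k 0)"
      using ztmin[where k=k and t=1 and w="zt k 0"] tmax inner_start zZ by simp
    also have "\<dots> \<le> F u (zt k 0)" using xtmin[where k=k and t=1 and u=u] tmax 0 by simp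
    finally show ?case using inner_start by simp
  next
    case (Suc n)
    have "F (xt k (Suc (Suc n))) (zt k (Suc (Suc n))) \<le> F (xt k (Suc (Suc n))) (zt k (Suc n))"
      using ztmin[where k=k and t="Suc (Suc n)" and w="zt k (Suc n)"] ztZ[where k=k and t="Suc n"] Suc.prems by simp
    also have "\<dots> \<le> F (xt k (Suc n)) (zt k (Suc n))"
      using xtmin[where k=k and t="Suc (Suc n)" and u="xt k (Suc n)"] xtD[where k=k and t="Suc n"] Suc.prems by simp
    also have "\<dots> \<le> F u (z k)" using Suc.IH Suc.prems by simp
    finally show ?case .
  qed
  have stepb: "\<And>k u. u \<in> D k \<Longrightarrow> f (Suc k) \<le> F u (z k)"
  proof -
    fix k u assume "u \<in> D k"
    then show "f (Suc k) \<le> F u (z k)"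
      using chain[where n="tmax - 1" and k=k and u=u] tmax x_next z_next unfolding f_def by simp
  qed
  have fdec: "\<And>m. 1 \<le> m \<Longrightarrow> f (Suc m) \<le> f m"
    using stepb xD unfolding f_def by blast
  have fmono: "\<And>m n. 1 \<le> m \<Longrightarrow> m \<le> n \<Longrightarrow> f n \<le> f m"
  proof -
    fix m n :: nat assume m: "1 \<le> m" and "m \<le> n"
    from \<open>m \<le> n\<close> show "f n \<le> f m"
    proof (induction n rule: dec_induct)
      case base then show ?case by simp
    next
      case (step n) then show ?case using fdec[of n] m by simp
    qed
  qed
  show ?thesis
  proof
    define L where "L = {w. \<exists>y\<in>C. w \<in> Z \<and> G (y, w) \<le> f 1}"
    have "bounded L" unfolding L_def
    proof (rule bounded_sub[OF Gcv Gcont Ccomp Z_closed Z_convex xC zZ])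
      show "G (x 1, z 1) \<le> f 1" unfolding G_def f_def by simp
      have "inf_compact_on (\<lambda>w. F (x 1) w) Z" using inf_comp xC C_def by blast
      then show "compact {w \<in> Z. G (x 1, w) \<le> f 1}" unfolding inf_compact_on_def G_def by simp
    qed
    then have bL: "bounded (C \<times> (L \<union> {z 0}))"
      using Ccomp by (intro bounded_Times) (auto simp: compact_imp_bounded)
    have inL: "(x k, z k) \<in> C \<times> (L \<union> {z 0})" for k
    proof (cases k)
      case 0 then show ?thesis using xC by simp
    next
      case (Suc j)
      then have "f k \<le> f 1" using fmono[of 1 k] by simp
      then show ?thesis using xC zZ unfolding L_def G_def f_def by auto
    qed
    have "seq_compact (closure (C \<times> (L \<union> {z 0})))"
      using bL by (intro compact_imp_seq_compact) simp
    moreover have "\<forall>k. (x k, z k) \<in> closure (C \<times> (L \<union> {z 0}))"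
      using inL closure_subset by blast
    ultimately obtain l r where "strict_mono r" "((\<lambda>k. (x k, z k)) \<circ> r) \<longlonglongrightarrow> l"
      by (rule seq_compactE)
    then show "\<exists>l r. strict_mono r \<and> ((\<lambda>k. (x (r k), z (r k))) \<longlongrightarrow> l) sequentially"
      unfolding o_def by blast
  next
    show "\<forall>xb zb r. strict_mono r \<and> ((\<lambda>k. (x (r k), z (r k))) \<longlongrightarrow> (xb, zb)) sequentially
            \<longrightarrow> (xb, zb) \<in> argmin_set (\<lambda>p. F (fst p) (snd p)) (convex hull X \<times> Z)"
    proof (intro allI impI, elim conjE)
      fix xb zb and r :: "nat \<Rightarrow> nat"
      assume r: "strict_mono r" and lim: "((\<lambda>k. (x (r k), z (r k))) \<longlongrightarrow> (xb, zb)) sequentially"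
      have xl: "(\<lambda>k. x (r k)) \<longlonglongrightarrow> xb" using tendsto_fst[OF lim] by simp
      have zl: "(\<lambda>k. z (r k)) \<longlonglongrightarrow> zb" using tendsto_snd[OF lim] by simp
      have xbC: "xb \<in> C" using closed_sequentially[OF compact_imp_closed[OF Ccomp] _ xl] xC by blast
      have zbZ: "zb \<in> Z" using closed_sequentially[OF Z_closed _ zl] zZ by blast
      define fb where "fb = F xb zb"
      have fl: "(\<lambda>k. f (r k)) \<longlonglongrightarrow> fb" unfolding f_def fb_def by (rule Ftend[OF xl zl])
      have fble: "fb \<le> f m" if m: "1 \<le> m" for m
      proof (rule LIMSEQ_le_const2[OF fl])
        show "\<exists>N. \<forall>n\<ge>N. f (r n) \<le> f m"
          using fmono[OF m] seq_suble[OF r] le_trans by blast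
      qed
      have zopt: "fb \<le> F xb w" if w: "w \<in> Z" for w
      proof -
        have "(\<lambda>k. F (x (r k)) w) \<longlonglongrightarrow> F xb w" by (rule Ftend[OF xl tendsto_const])
        moreover have "\<And>k. f (r k) \<le> F (x (r k)) w" using zmin w unfolding f_def by blast
        ultimately show ?thesis using fl by (intro LIMSEQ_le) auto
      qed
      have hX: "xhat (r (Suc k)) \<in> X" for k
      proof -
        have "r (Suc k) \<ge> 1" using seq_suble[OF r, of "Suc k"] by simp
        then obtain j where "r (Suc k) = Suc j" by (cases "r (Suc k)") auto
        then show ?thesis using xhat_def[of j] unfolding argmin_set_def by auto
      qed
      obtain xs s where xsX: "xs \<in> X" and s: "strict_mono s"
        and hl: "((\<lambda>k. xhat (r (Suc k))) \<circ> s) \<longlonglongrightarrow> xs"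
        using seq_compactE[OF compact_imp_seq_compact[OF X_compact]] hX by metis
      define q where "q = (\<lambda>k. r (Suc (s k)))"
      have sms: "strict_mono (\<lambda>k. Suc (s k))" using s by (simp add: strict_mono_def)
      have q1: "1 \<le> q k" for k unfolding q_def using seq_suble[OF r, of "Suc (s k)"] by simp
      have xq: "(\<lambda>k. x (q k)) \<longlonglongrightarrow> xb" unfolding q_def
        using LIMSEQ_subseq_LIMSEQ[OF xl sms] by (simp add: o_def)
      have zq: "(\<lambda>k. z (q k)) \<longlonglongrightarrow> zb" unfolding q_def
        using LIMSEQ_subseq_LIMSEQ[OF zl sms] by (simp add: o_def)
      have hq: "(\<lambda>k. xhat (q k)) \<longlonglongrightarrow> xs" unfolding q_def using hl by (simp add: o_def)
      have DFq: "(\<lambda>k. DF (x (q k), z (q k))) \<longlonglongrightarrow> DF (xb, zb)" by (rule DFtend[OF xq zq])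
      have segopt: "fb \<le> F (xb + a *\<^sub>R (xs - xb)) zb" if a: "0 \<le> a" "a \<le> 1" for a
      proof -
        have "(\<lambda>k. F (x (q k) + a *\<^sub>R (xhat (q k) - x (q k))) (z (q k))) \<longlonglongrightarrow> F (xb + a *\<^sub>R (xs - xb)) zb"
          by (intro Ftend zq tendsto_intros xq hq)
        moreover have "fb \<le> F (x (q k) + a *\<^sub>R (xhat (q k) - x (q k))) (z (q k))" for k
        proof -
          have "fb \<le> f (Suc (q k))" using fble[of "Suc (q k)"] by simp
          also have "\<dots> \<le> F (x (q k) + a *\<^sub>R (xhat (q k) - x (q k))) (z (q k))"
            by (intro stepb seg q1 a)
          finally show ?thesis .
        qed
        ultimately show ?thesis by (intro LIMSEQ_le_const) auto
      qed
      define p where "p = (xb, zb)"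
      have Gp: "G p = fb" unfolding G_def p_def fb_def by simp
      have d1: "0 \<le> DF p (xs - xb, 0)"
      proof (rule dir_nonneg[OF Gder])
        fix t :: real assume "0 < t" "t \<le> 1"
        then show "G p \<le> G (p + t *\<^sub>R (xs - xb, 0))"
          using segopt[of t] unfolding Gp unfolding G_def p_def by simp
      qed
      have d2: "0 \<le> DF p (0, w - zb)" if w: "w \<in> Z" for w
      proof (rule dir_nonneg[OF Gder])
        fix t :: real assume t: "0 < t" "t \<le> 1"
        have "zb + t *\<^sub>R (w - zb) = (1 - t) *\<^sub>R zb + t *\<^sub>R w" by (simp add: algebra_simps)
        moreover have "(1 - t) *\<^sub>R zb + t *\<^sub>R w \<in> Z"
          using t w zbZ Z_convex by (intro convexD) auto
        ultimately have "zb + t *\<^sub>R (w - zb) \<in> Z" by simp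
        then show "G p \<le> G (p + t *\<^sub>R (0, w - zb))"
          using zopt unfolding Gp unfolding G_def p_def by simp
      qed
      have d3: "DF p (xs - xb, 0) \<le> DF p (u - xb, 0)" if u: "u \<in> X" for u
      proof -
        have "(\<lambda>k. DF (x (q k), z (q k)) (xhat (q k) - x (q k), 0)) \<longlonglongrightarrow> DF p (xs - xb, 0)"
          unfolding p_def by (intro blinfun.tendsto DFq tendsto_intros hq xq)
        moreover have "(\<lambda>k. DF (x (q k), z (q k)) (u - x (q k), 0)) \<longlonglongrightarrow> DF p (u - xb, 0)"
          unfolding p_def by (intro blinfun.tendsto DFq tendsto_intros xq)
        moreover have "DF (x (q k), z (q k)) (xhat (q k) - x (q k), 0) \<le> DF (x (q k), z (q k)) (u - x (q k), 0)" for k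
        proof -
          obtain j where "q k = Suc j" using q1[of k] by (cases "q k") auto
          then show ?thesis using xhat_def[of j] u unfolding argmin_set_def by auto
        qed
        ultimately show ?thesis by (intro LIMSEQ_le) auto
      qed
      define H where "H = {u. 0 \<le> DF p (u - xb, 0)}"
      have "convex H" unfolding H_def
      proof (rule convexI)
        fix u1 u2 and a b :: real
        assume h: "u1 \<in> {u. 0 \<le> DF p (u - xb, 0)}" "u2 \<in> {u. 0 \<le> DF p (u - xb, 0)}"
          "0 \<le> a" "0 \<le> b" "a + b = 1"
        have peq: "(a *\<^sub>R u1 + b *\<^sub>R u2 - xb, 0::'b) = a *\<^sub>R (u1 - xb, 0) + b *\<^sub>R (u2 - xb, 0)"
          using h(5) by (simp add: algebra_simps flip: scaleR_add_left)
        have "DF p (a *\<^sub>R u1 + b *\<^sub>R u2 - xb, 0) = a * DF p (u1 - xb, 0) + b * DF p (u2 - xb, 0)"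
          unfolding peq by (simp only: blinfun.add_right blinfun.scaleR_right real_scaleR_def)
        then show "a *\<^sub>R u1 + b *\<^sub>R u2 \<in> {u. 0 \<le> DF p (u - xb, 0)}" using h by simp
      qed
      moreover have "X \<subseteq> H" unfolding H_def using d1 d3 by fastforce
      ultimately have CH: "C \<subseteq> H" unfolding C_def by (rule hull_minimal[rotated])
      have opt: "G p \<le> G (u, w)" if u: "u \<in> C" and w: "w \<in> Z" for u w
      proof -
        have "G p + DF p ((u, w) - p) \<le> G (u, w)" by (rule tangent_ineq[OF Gcv Gder])
        moreover have peq2: "(u, w) - p = (u - xb, 0) + (0, w - zb)" unfolding p_def by simp
        have "DF p ((u, w) - p) = DF p (u - xb, 0) + DF p (0, w - zb)"
          unfolding peq2 by (simp only: blinfun.add_right)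
        moreover have "0 \<le> DF p (u - xb, 0)" using CH u unfolding H_def by blast
        ultimately show ?thesis using d2[OF w] by simp
      qed
      show "(xb, zb) \<in> argmin_set (\<lambda>p. F (fst p) (snd p)) (convex hull X \<times> Z)"
      proof -
        have hT: "convex hull (X \<times> Z) = C \<times> Z"
          unfolding C_def convex_hull_Times using hull_same[of convex Z, OF Z_convex] by simp
        show ?thesis unfolding argmin_set_def hT using xbC zbZ opt unfolding G_def p_def by auto
      qed
    qed
  qed
qed

end
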